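(* Let $n\ge1$ and consider the SBCM with parameters $\gamma\ge0$, $\delta\ge0$ on the path graph $P_n$ with nodes $1,2,\ldots,n+2$ (edges $\{k,k+1\}$), where nodes $1$ and $n+2$ are zealots with opinions $-(n+1)/2$ and $(n+1)/2$ respectively, and nodes $2,\ldots,n+1$ are persuadable. Let $\bar{\mathbf{x}}$ be the harmonic state $\bar x_k=k-\frac{n+3}{2}$ (so adjacent nodes have opinions differing by exactly $1$), which is a steady state for every $\gamma$. Let $v=\omega(1)=\frac{1}{1+e^{\gamma-\gamma\delta}}$ and $g(\gamma)=2\gamma(1-v)-1$. Then $\bar{\mathbf{x}}$ is linearly stable if and only if $g(\gamma)<0$, and is linearly unstable if and only if $g(\gamma)>0$.
   Context: The SBCM on a graph with zealots $\mathcal{Z}$ and persuadable nodes $\mathcal{P}$: with $w(x_i,x_j)=\omega(|x_i-x_j|)=\frac{1}{1+e^{\gamma(x_i-x_j)^2-\gamma\delta}}$ for adjacent $i\sim j$ and $0$ otherwise, the dynamics are $\frac{dx_i}{dt}=f_i(\mathbf{x})=\frac{\sum_j w(x_i,x_j)(x_j-x_i)}{\sum_j w(x_i,x_j)}$ for $i\in\mathcal{P}$ and $\frac{dx_i}{dt}=0$ for zealots. A steady state is linearly stable if all eigenvalues of $\mathbf{J}_{\mathcal{P}}=(\partial f_i/\partial x_j)_{i,j\in\mathcal{P}}$ at it are strictly negative, and linearly unstable if $\mathbf{J}_{\mathcal{P}}$ has a strictly positive eigenvalue. *)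

theory Defs
  imports Complex_Main "HOL-Analysis.Derivative" "Jordan_Normal_Form.Char_Poly"
begin

definition omega :: "real \<Rightarrow> real \<Rightarrow> real \<Rightarrow> real" where
  "omega \<gamma> \<delta> d = 1 / (1 + exp (\<gamma> * d^2 - \<gamma> * \<delta>))"

definition sbcm_w :: "(nat \<Rightarrow> nat \<Rightarrow> bool) \<Rightarrow> real \<Rightarrow> real \<Rightarrow> (nat \<Rightarrow> real) \<Rightarrow> nat \<Rightarrow> nat \<Rightarrow> real" where
  "sbcm_w adj \<gamma> \<delta> x i j = (if adj i j then omega \<gamma> \<delta> \<bar>x i - x j\<bar> else 0)"

definition sbcm_f :: "nat set \<Rightarrow> (nat \<Rightarrow> nat \<Rightarrow> bool) \<Rightarrow> real \<Rightarrow> real \<Rightarrow> (nat \<Rightarrow> real) \<Rightarrow> nat \<Rightarrow> real" where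
  "sbcm_f V adj \<gamma> \<delta> x i =
     (\<Sum>j\<in>V. sbcm_w adj \<gamma> \<delta> x i j * (x j - x i)) / (\<Sum>j\<in>V. sbcm_w adj \<gamma> \<delta> x i j)"

definition path_nodes :: "nat \<Rightarrow> nat set" where
  "path_nodes n = {1..n+2}"

definition path_adj :: "nat \<Rightarrow> nat \<Rightarrow> nat \<Rightarrow> bool" where
  "path_adj n i j = (i \<in> path_nodes n \<and> j \<in> path_nodes n \<and> (j = i + 1 \<or> i = j + 1))"

definition harmonic :: "nat \<Rightarrow> nat \<Rightarrow> real" where
  "harmonic n k = real k - (real n + 3) / 2"

text \<open>Row/column index a (0-based) corresponds to node a+2; entry (a,b) is the partial
  derivative of f_{a+2} with respect to x_{b+2}.\<close>
definition path_jacobian :: "nat \<Rightarrow> real \<Rightarrow> real \<Rightarrow> (nat \<Rightarrow> real) \<Rightarrow> real mat" where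
  "path_jacobian n \<gamma> \<delta> x = mat n n (\<lambda>(a, b).
      deriv (\<lambda>t. sbcm_f (path_nodes n) (path_adj n) \<gamma> \<delta> (x((b+2) := t)) (a+2)) (x (b+2)))"

definition lin_stable :: "real mat \<Rightarrow> bool" where
  "lin_stable J = (\<forall>\<mu>. eigenvalue (map_mat complex_of_real J) \<mu> \<longrightarrow> \<mu> \<in> \<real> \<and> Re \<mu> < 0)"

definition lin_unstable :: "real mat \<Rightarrow> bool" where
  "lin_unstable J = (\<exists>\<mu>. eigenvalue (map_mat complex_of_real J) \<mu> \<and> \<mu> \<in> \<real> \<and> Re \<mu> > 0)"

end

theory Submission
  imports Defs "Jordan_Normal_Form.Spectral_Radius"
begin
lemma omega_abs: "omega g d \<bar>z\<bar> = omega g d z"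
  unfolding omega_def by simp

lemma f_path:
  assumes "2 \<le> i" "i \<le> n+1"
  shows "sbcm_f (path_nodes n) (path_adj n) \<gamma> \<delta> x i =
    (omega \<gamma> \<delta> (x i - x (i-1)) * (x (i-1) - x i) + omega \<gamma> \<delta> (x i - x (i+1)) * (x (i+1) - x i)) /
    (omega \<gamma> \<delta> (x i - x (i-1)) + omega \<gamma> \<delta> (x i - x (i+1)))"
proof -
  let ?V = "path_nodes n"
  have sub: "{i-1, i+1} \<subseteq> ?V" using assms by (auto simp: path_nodes_def)
  have z: "\<And>F. (\<Sum>k\<in>?V. sbcm_w (path_adj n) \<gamma> \<delta> x i k * F k) = 
      (\<Sum>k\<in>{i-1,i+1}. sbcm_w (path_adj n) \<gamma> \<delta> x i k * F k)"
    by (rule sum.mono_neutral_right) (use sub in \<open>auto simp: path_nodes_def sbcm_w_def path_adj_def\<close>)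
  have z2: "(\<Sum>k\<in>?V. sbcm_w (path_adj n) \<gamma> \<delta> x i k) = 
      (\<Sum>k\<in>{i-1,i+1}. sbcm_w (path_adj n) \<gamma> \<delta> x i k)"
    using z[of "\<lambda>_. 1"] by simp
  have ne: "i - 1 \<noteq> i + 1" by simp
  have a1: "path_adj n i (i-1)" "path_adj n i (i+1)" using assms by (auto simp: path_adj_def path_nodes_def)
  show ?thesis unfolding sbcm_f_def z z2 using ne a1
    by (simp add: sbcm_w_def omega_abs)
qed


lemma W_deriv[derivative_intros]:
  "(f has_real_derivative f') (at x within s) \<Longrightarrow>
   ((\<lambda>t. omega \<gamma> \<delta> (f t)) has_real_derivative
     (-2*\<gamma>*f x*exp(\<gamma>*(f x)^2-\<gamma>*\<delta>)/(1+exp(\<gamma>*(f x)^2-\<gamma>*\<delta>))^2 * f')) (at x within s)"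
proof -
  have p: "1 + exp(\<gamma>*(f x)^2-\<gamma>*\<delta>) \<noteq> 0" by (smt (verit) exp_gt_zero)
  show "(f has_real_derivative f') (at x within s) \<Longrightarrow> ?thesis"
  unfolding omega_def
  apply (rule derivative_eq_intros refl | assumption)+
  using p apply simp
  using p apply (simp add: field_simps power2_eq_square)
  done
qed

lemma deriv_quot0:
  assumes "(N has_real_derivative N') (at t0)" "(D has_real_derivative D') (at t0)"
    "N t0 = 0" "D t0 \<noteq> 0"
  shows "deriv (\<lambda>t. N t / D t) t0 = N' / D t0"
proof -
  have "((\<lambda>t. N t / D t) has_real_derivative (N' * D t0 - N t0 * D') / (D t0 * D t0)) (at t0)"
    by (rule DERIV_divide[OF assms(1,2,4)])
  then show ?thesis using assms(3,4) by (simp add: DERIV_imp_deriv)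
qed

lemma omega_pos: "omega \<gamma> \<delta> d > 0"
  unfolding omega_def by (simp add: add_pos_pos)

lemma omega_one: "omega \<gamma> \<delta> 1 = 1/(1+exp(\<gamma>-\<gamma>*\<delta>))" "omega \<gamma> \<delta> (-1) = 1/(1+exp(\<gamma>-\<gamma>*\<delta>))"
  unfolding omega_def by simp_all

lemma quot_aux: "(u::real) \<noteq> 0 \<Longrightarrow> (2*(2*a/u^2) - 2/u)/(2/u) = 2*a/u - 1"
proof -
  assume u: "u \<noteq> 0"
  have "2*(2*a/u^2) - 2/u = (2/u) * (2*a/u - 1)" using u by (simp add: field_simps power2_eq_square)
  thus ?thesis using u by simp
qed

lemma diag:
  "deriv (\<lambda>t. (omega \<gamma> \<delta> (t-(c-1))*((c-1)-t) + omega \<gamma> \<delta> (t-(c+1))*((c+1)-t)) /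
      (omega \<gamma> \<delta> (t-(c-1)) + omega \<gamma> \<delta> (t-(c+1)))) c = 2*\<gamma>*(1 - omega \<gamma> \<delta> 1) - 1"
proof -
  define E where "E = exp(\<gamma>-\<gamma>*\<delta>)"
  have E: "E > 0" unfolding E_def by simp
  have o1: "omega \<gamma> \<delta> 1 = 1/(1+E)" "omega \<gamma> \<delta> (-1) = 1/(1+E)" unfolding E_def omega_one by simp_all
  have "((\<lambda>t. omega \<gamma> \<delta> (t-(c-1))*((c-1)-t) + omega \<gamma> \<delta> (t-(c+1))*((c+1)-t)) has_real_derivative
     2*(2*\<gamma>*E/(1+E)^2) - 2/(1+E)) (at c)"
    apply (rule derivative_eq_intros refl | simp)+
    apply (simp add: o1 E_def)
    done
  moreover have "((\<lambda>t. omega \<gamma> \<delta> (t-(c-1)) + omega \<gamma> \<delta> (t-(c+1))) has_real_derivative 0) (at c)"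
    apply (rule derivative_eq_intros refl | simp)+
    done
  ultimately have "deriv (\<lambda>t. (omega \<gamma> \<delta> (t-(c-1))*((c-1)-t) + omega \<gamma> \<delta> (t-(c+1))*((c+1)-t)) /
      (omega \<gamma> \<delta> (t-(c-1)) + omega \<gamma> \<delta> (t-(c+1)))) c = (2*(2*\<gamma>*E/(1+E)^2) - 2/(1+E)) / (2/(1+E))"
    using E by (subst deriv_quot0) (auto simp: o1 add_pos_pos)
  also have "\<dots> = 2*\<gamma>*(1 - omega \<gamma> \<delta> 1) - 1"
  proof -
    have ne: "1 + E \<noteq> 0" using E by simp
    have "(2*(2*\<gamma>*E/(1+E)^2) - 2/(1+E)) / (2/(1+E)) = 2*(\<gamma>*E)/(1+E) - 1"
      using quot_aux[OF ne, of "\<gamma>*E"] by (simp add: mult.assoc)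
    also have "\<dots> = 2*\<gamma>*(1 - 1/(1+E)) - 1" using ne by (simp add: field_simps)
    finally show ?thesis by (simp add: o1)
  qed
  finally show ?thesis .
qed

lemma diag2:
  assumes "p = c - 1" "r = c + 1"
  shows "deriv (\<lambda>t. (omega \<gamma> \<delta> (t-p)*(p-t) + omega \<gamma> \<delta> (t-r)*(r-t)) /
      (omega \<gamma> \<delta> (t-p) + omega \<gamma> \<delta> (t-r))) c = 2*\<gamma>*(1 - omega \<gamma> \<delta> 1) - 1"
  using diag[of \<gamma> \<delta> c] assms by simp

lemma quot_aux2: "(u::real) \<noteq> 0 \<Longrightarrow> (1/u - 2*a/u^2)/(2/u) = (1 - 2*a/u)/2"
proof -
  assume u: "u \<noteq> 0"
  have "1/u - 2*a/u^2 = (2/u) * ((1 - 2*a/u)/2)" using u by (simp add: field_simps power2_eq_square)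
  thus ?thesis using u by simp
qed

lemma offval: 
  assumes E: "E = exp(\<gamma>-\<gamma>*\<delta>)"
  shows "(1/(1+E) - 2*(\<gamma>*E)/(1+E)^2)/(2/(1+E)) = - (2*\<gamma>*(1 - omega \<gamma> \<delta> 1) - 1) / 2"
proof -
  have E0: "E > 0" using E by simp
  hence ne: "1 + E \<noteq> 0" by simp
  have o1: "omega \<gamma> \<delta> 1 = 1/(1+E)" unfolding E omega_one by simp
  have "(1/(1+E) - 2*(\<gamma>*E)/(1+E)^2)/(2/(1+E)) = (1 - 2*(\<gamma>*E)/(1+E))/2" by (rule quot_aux2[OF ne])
  also have "\<dots> = - (2*\<gamma>*(1 - 1/(1+E)) - 1) / 2" using ne by (simp add: field_simps)
  finally show ?thesis by (simp add: o1)
qed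

lemma up:
  assumes "p = c - 1" "r = c + 1"
  shows "deriv (\<lambda>t. (omega \<gamma> \<delta> (c-p)*(p-c) + omega \<gamma> \<delta> (c-t)*(t-c)) /
      (omega \<gamma> \<delta> (c-p) + omega \<gamma> \<delta> (c-t))) r = - (2*\<gamma>*(1 - omega \<gamma> \<delta> 1) - 1) / 2"
proof -
  define E where "E = exp(\<gamma>-\<gamma>*\<delta>)"
  have E: "E > 0" unfolding E_def by simp
  have o1: "omega \<gamma> \<delta> 1 = 1/(1+E)" "omega \<gamma> \<delta> (-1) = 1/(1+E)" unfolding E_def omega_one by simp_all
  have "((\<lambda>t. omega \<gamma> \<delta> (c-p)*(p-c) + omega \<gamma> \<delta> (c-t)*(t-c)) has_real_derivative
     1/(1+E) - 2*(\<gamma>*E)/(1+E)^2) (at r)"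
    apply (rule derivative_eq_intros refl | simp)+
    using assms apply (simp add: o1 E_def)
    done
  moreover have "((\<lambda>t. omega \<gamma> \<delta> (c-p) + omega \<gamma> \<delta> (c-t)) has_real_derivative 
     -2*(\<gamma>*E)/(1+E)^2) (at r)"
    apply (rule derivative_eq_intros refl | simp)+
    using assms apply (simp add: o1 E_def)
    done
  ultimately have "deriv (\<lambda>t. (omega \<gamma> \<delta> (c-p)*(p-c) + omega \<gamma> \<delta> (c-t)*(t-c)) /
      (omega \<gamma> \<delta> (c-p) + omega \<gamma> \<delta> (c-t))) r = (1/(1+E) - 2*(\<gamma>*E)/(1+E)^2)/(2/(1+E))"
    using E assms by (subst deriv_quot0) (auto simp: o1 add_pos_pos)
  also have "\<dots> = - (2*\<gamma>*(1 - omega \<gamma> \<delta> 1) - 1) / 2" by (rule offval[OF E_def])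
  finally show ?thesis .
qed

lemma down:
  assumes "p = c - 1" "r = c + 1"
  shows "deriv (\<lambda>t. (omega \<gamma> \<delta> (c-t)*(t-c) + omega \<gamma> \<delta> (c-r)*(r-c)) /
      (omega \<gamma> \<delta> (c-t) + omega \<gamma> \<delta> (c-r))) p = - (2*\<gamma>*(1 - omega \<gamma> \<delta> 1) - 1) / 2"
proof -
  define E where "E = exp(\<gamma>-\<gamma>*\<delta>)"
  have E: "E > 0" unfolding E_def by simp
  have o1: "omega \<gamma> \<delta> 1 = 1/(1+E)" "omega \<gamma> \<delta> (-1) = 1/(1+E)" unfolding E_def omega_one by simp_all
  have "((\<lambda>t. omega \<gamma> \<delta> (c-t)*(t-c) + omega \<gamma> \<delta> (c-r)*(r-c)) has_real_derivative
     1/(1+E) - 2*(\<gamma>*E)/(1+E)^2) (at p)"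
    apply (rule derivative_eq_intros refl | simp)+
    using assms apply (simp add: o1 E_def)
    done
  moreover have "((\<lambda>t. omega \<gamma> \<delta> (c-t) + omega \<gamma> \<delta> (c-r)) has_real_derivative 
     2*(\<gamma>*E)/(1+E)^2) (at p)"
    apply (rule derivative_eq_intros refl | simp)+
    using assms apply (simp add: o1 E_def)
    done
  ultimately have "deriv (\<lambda>t. (omega \<gamma> \<delta> (c-t)*(t-c) + omega \<gamma> \<delta> (c-r)*(r-c)) /
      (omega \<gamma> \<delta> (c-t) + omega \<gamma> \<delta> (c-r))) p = (1/(1+E) - 2*(\<gamma>*E)/(1+E)^2)/(2/(1+E))"
    using E assms by (subst deriv_quot0) (auto simp: o1 add_pos_pos)
  also have "\<dots> = - (2*\<gamma>*(1 - omega \<gamma> \<delta> 1) - 1) / 2" by (rule offval[OF E_def])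
  finally show ?thesis .
qed


lemma f_path':
  assumes "a < n"
  shows "sbcm_f (path_nodes n) (path_adj n) \<gamma> \<delta> x (a+2) =
    (omega \<gamma> \<delta> (x (a+2) - x (a+1)) * (x (a+1) - x (a+2)) + omega \<gamma> \<delta> (x (a+2) - x (a+3)) * (x (a+3) - x (a+2))) /
    (omega \<gamma> \<delta> (x (a+2) - x (a+1)) + omega \<gamma> \<delta> (x (a+2) - x (a+3)))"
  using f_path[of "a+2" n \<gamma> \<delta> x] assms by (simp add: numeral_eq_Suc)

lemma jac_entry:
  assumes "a < n" "b < n"
  shows "path_jacobian n \<gamma> \<delta> (harmonic n) $$ (a,b) =
    (if a = b then 2*\<gamma>*(1 - omega \<gamma> \<delta> 1) - 1
     else if b = a+1 \<or> a = b+1 then - (2*\<gamma>*(1 - omega \<gamma> \<delta> 1) - 1) / 2 else 0)"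
proof -
  define h where "h = harmonic n"
  have hs: "\<And>k. h (k+1) = h k + 1" "\<And>k. h (k+2) = h k + 2" "\<And>k. h (k+3) = h k + 3"
    unfolding h_def harmonic_def by simp_all
  have 1: "path_jacobian n \<gamma> \<delta> (harmonic n) $$ (a,b) =
     deriv (\<lambda>t. sbcm_f (path_nodes n) (path_adj n) \<gamma> \<delta> (h((b+2):=t)) (a+2)) (h(b+2))"
    using assms by (simp add: path_jacobian_def h_def)
  have 2: "(\<lambda>t. sbcm_f (path_nodes n) (path_adj n) \<gamma> \<delta> (h((b+2):=t)) (a+2)) = (\<lambda>t.
    (omega \<gamma> \<delta> ((h((b+2):=t)) (a+2) - (h((b+2):=t)) (a+1)) * ((h((b+2):=t)) (a+1) - (h((b+2):=t)) (a+2)) 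
     + omega \<gamma> \<delta> ((h((b+2):=t)) (a+2) - (h((b+2):=t)) (a+3)) * ((h((b+2):=t)) (a+3) - (h((b+2):=t)) (a+2))) /
    (omega \<gamma> \<delta> ((h((b+2):=t)) (a+2) - (h((b+2):=t)) (a+1)) + omega \<gamma> \<delta> ((h((b+2):=t)) (a+2) - (h((b+2):=t)) (a+3))))"
    by (rule ext, rule f_path'[OF assms(1)])
  show ?thesis
  proof (cases "a = b")
    case True
    have D: "deriv (\<lambda>t. (omega \<gamma> \<delta> (t-h(a+1))*(h(a+1)-t) + omega \<gamma> \<delta> (t-h(a+3))*(h(a+3)-t)) /
      (omega \<gamma> \<delta> (t-h(a+1)) + omega \<gamma> \<delta> (t-h(a+3)))) (h(a+2)) = 2*\<gamma>*(1 - omega \<gamma> \<delta> 1) - 1"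
      by (rule diag2) (simp_all add: h_def harmonic_def)
    show ?thesis unfolding 1 2 using True D
      by simp
  next
    case ab: False
    show ?thesis
    proof (cases "b = a+1")
      case True
      have D: "deriv (\<lambda>t. (omega \<gamma> \<delta> (h(a+2)-h(a+1))*(h(a+1)-h(a+2)) + omega \<gamma> \<delta> (h(a+2)-t)*(t-h(a+2))) /
        (omega \<gamma> \<delta> (h(a+2)-h(a+1)) + omega \<gamma> \<delta> (h(a+2)-t))) (h(b+2)) = - (2*\<gamma>*(1 - omega \<gamma> \<delta> 1) - 1) / 2"
        by (rule up) (use True in \<open>simp_all add: h_def harmonic_def\<close>)
      show ?thesis unfolding 1 2 using ab True D
        by simp
    next
      case F2: False
      show ?thesis
      proof (cases "a = b+1")
        case True
        have D: "deriv (\<lambda>t. (omega \<gamma> \<delta> (h(a+2)-t)*(t-h(a+2)) + omega \<gamma> \<delta> (h(a+2)-h(a+3))*(h(a+3)-h(a+2))) /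
          (omega \<gamma> \<delta> (h(a+2)-t) + omega \<gamma> \<delta> (h(a+2)-h(a+3)))) (h(b+2)) = - (2*\<gamma>*(1 - omega \<gamma> \<delta> 1) - 1) / 2"
          by (rule down) (use True in \<open>simp_all add: h_def harmonic_def\<close>)
        show ?thesis unfolding 1 2 using ab F2 True D
          by simp
      next
        case False
        then show ?thesis unfolding 1 2 using ab F2
          by (simp add: DERIV_imp_deriv)
      qed
    qed
  qed
qed


definition mP :: "nat \<Rightarrow> nat \<Rightarrow> real" where
  "mP i j = (if i = j then 1 else if j = i+1 \<or> i = j+1 then -1/2 else 0)"

lemma inner:
  fixes w :: "nat \<Rightarrow> complex"
  assumes "i < Suc k"
  shows "(\<Sum>j<Suc k. of_real (mP i j) * w j) =
     w i - (if 0 < i then w (i-1)/2 else 0) - (if i < k then w (i+1)/2 else 0)"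
proof -
  have e: "\<And>j. of_real (mP i j) * w j = (if j = i then w j else 0) - (if j = i - 1 \<and> 0 < i then w j/2 else 0)
     - (if j = i+1 then w j/2 else 0)"
    by (auto simp: mP_def)
  have s1: "(\<Sum>j<Suc k. if j = i then w j else 0) = w i"
    using assms by (simp only: sum.delta finite_lessThan) simp
  have s2: "(\<Sum>j<Suc k. if j = i - 1 \<and> 0 < i then w j/2 else 0) = (if 0 < i then w (i-1)/2 else 0)"
  proof (cases "0 < i")
    case True
    have "i - 1 \<in> {..<Suc k}" using assms by auto
    then show ?thesis using True by (simp only: True simp_thms sum.delta finite_lessThan if_True)
  qed simp
  have s3: "(\<Sum>j<Suc k. if j = i+1 then w j/2 else 0) = (if i < k then w (i+1)/2 else 0)"
    by (simp only: sum.delta finite_lessThan) simp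
  show ?thesis unfolding e sum_subtractf s1 s2 s3 ..
qed

lemma cmod_diff_sq: "cmod (a - b)^2 = cmod a^2 + cmod b^2 - 2 * Re (cnj a * b)"
  unfolding cmod_power2 by (simp add: power2_eq_square algebra_simps)

lemma ident:
  fixes w :: "nat \<Rightarrow> complex"
  shows "2 * ((\<Sum>i<Suc m. cmod (w i)^2) - (\<Sum>i<m. Re (cnj (w i) * w (i+1)))) =
    cmod (w 0)^2 + cmod (w m)^2 + (\<Sum>i<m. cmod (w i - w (i+1))^2)"
proof (induction m)
  case 0
  then show ?case by simp
next
  case (Suc m)
  then show ?case by (simp add: cmod_diff_sq algebra_simps)
qed

lemma quad:
  fixes w :: "nat \<Rightarrow> complex"
  assumes "i0 < Suc k" "w i0 \<noteq> 0"
  shows "\<exists>R>0. (\<Sum>i<Suc k. cnj (w i) * (\<Sum>j<Suc k. of_real (mP i j) * w j)) = of_real R"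
proof -
  define R where "R = (\<Sum>i<Suc k. cmod (w i)^2) - (\<Sum>i<k. Re (cnj (w i) * w (i+1)))"
  have eq0: "(\<Sum>i<Suc k. cnj (w i) * (\<Sum>j<Suc k. of_real (mP i j) * w j)) =
     (\<Sum>i<Suc k. cnj (w i) * (w i - (if 0 < i then w (i-1)/2 else 0) - (if i < k then w (i+1)/2 else 0)))"
    by (rule sum.cong[OF refl]) (subst inner; simp)
  have "(\<Sum>i<Suc k. cnj (w i) * (\<Sum>j<Suc k. of_real (mP i j) * w j)) =
     (\<Sum>i<Suc k. cnj (w i) * w i) - (\<Sum>i<Suc k. if 0 < i then cnj (w i) * w (i-1) / 2 else 0)
      - (\<Sum>i<Suc k. if i < k then cnj (w i) * w (i+1) / 2 else 0)"
  proof -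
    have pt: "\<And>i. cnj (w i) * (w i - (if 0 < i then w (i-1)/2 else 0) - (if i < k then w (i+1)/2 else 0)) =
      cnj (w i) * w i - (if 0 < i then cnj (w i) * w (i-1) / 2 else 0) - (if i < k then cnj (w i) * w (i+1) / 2 else 0)"
      by (simp add: algebra_simps)
    show ?thesis unfolding eq0 pt sum_subtractf ..
  qed
  also have "(\<Sum>i<Suc k. if 0 < i then cnj (w i) * w (i-1) / 2 else 0) = (\<Sum>i<k. cnj (w (i+1)) * w i / 2)"
    by (subst sum.lessThan_Suc_shift) simp
  also have "(\<Sum>i<Suc k. if i < k then cnj (w i) * w (i+1) / 2 else 0) = (\<Sum>i<k. cnj (w i) * w (i+1) / 2)"
    by simp
  also have "(\<Sum>i<Suc k. cnj (w i) * w i) - (\<Sum>i<k. cnj (w (i+1)) * w i / 2) - (\<Sum>i<k. cnj (w i) * w (i+1) / 2)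
     = (\<Sum>i<Suc k. cnj (w i) * w i) - (\<Sum>i<k. (cnj (w i) * w (i+1) + cnj (cnj (w i) * w (i+1))) / 2)"
    by (simp add: sum_subtractf[symmetric] diff_divide_distrib add_divide_distrib sum.distrib algebra_simps)
  also have "\<dots> = of_real R"
  proof -
    have a: "(\<Sum>i<Suc k. cnj (w i) * w i) = of_real (\<Sum>i<Suc k. cmod (w i)^2)"
      unfolding of_real_sum by (rule sum.cong[OF refl]) (simp only: complex_norm_square mult.commute)
    have b: "(\<Sum>i<k. (cnj (w i) * w (i+1) + cnj (cnj (w i) * w (i+1))) / 2) = of_real (\<Sum>i<k. Re (cnj (w i) * w (i+1)))"
      unfolding of_real_sum complex_add_cnj by (rule sum.cong[OF refl]) simp
    show ?thesis unfolding a b R_def of_real_diff ..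
  qed
  finally have Q: "(\<Sum>i<Suc k. cnj (w i) * (\<Sum>j<Suc k. of_real (mP i j) * w j)) = of_real R" .
  have R2: "2 * R = cmod (w 0)^2 + cmod (w k)^2 + (\<Sum>i<k. cmod (w i - w (i+1))^2)"
    unfolding R_def by (rule ident)
  have "R > 0"
  proof (rule ccontr)
    assume "\<not> R > 0"
    moreover have "R \<ge> 0" using R2 by (smt (verit) sum_nonneg zero_le_power2)
    ultimately have "2 * R = 0" by simp
    hence z0: "cmod (w 0)^2 = 0" and zs: "(\<Sum>i<k. cmod (w i - w (i+1))^2) = 0"
      using R2 by (smt (verit) sum_nonneg zero_le_power2)+
    have zs': "\<And>i. i < k \<Longrightarrow> w i = w (i+1)"
      using zs by (simp add: sum_nonneg_eq_0_iff)
    have "\<And>i. i < Suc k \<Longrightarrow> w i = 0"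
    proof -
      fix i show "i < Suc k \<Longrightarrow> w i = 0"
        by (induction i) (use z0 zs' in auto)
    qed
    with assms show False by blast
  qed
  with Q show ?thesis by blast
qed


lemma entry_mP:
  assumes "a < n" "b < n"
  shows "path_jacobian n \<gamma> \<delta> (harmonic n) $$ (a,b) = (2*\<gamma>*(1 - omega \<gamma> \<delta> 1) - 1) * mP a b"
  unfolding jac_entry[OF assms] mP_def by (auto simp: field_simps)

lemma eig_char:
  assumes ev: "eigenvalue (map_mat complex_of_real (path_jacobian n \<gamma> \<delta> (harmonic n))) \<mu>"
  shows "\<exists>r. \<mu> = of_real r \<and> (r < 0 \<longleftrightarrow> 2*\<gamma>*(1 - omega \<gamma> \<delta> 1) - 1 < 0)
             \<and> (r > 0 \<longleftrightarrow> 2*\<gamma>*(1 - omega \<gamma> \<delta> 1) - 1 > 0)"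
proof -
  define g where "g = 2*\<gamma>*(1 - omega \<gamma> \<delta> 1) - 1"
  define Jc where "Jc = map_mat complex_of_real (path_jacobian n \<gamma> \<delta> (harmonic n))"
  have dims: "dim_row Jc = n" "dim_col Jc = n" unfolding Jc_def path_jacobian_def by simp_all
  obtain v where v: "v \<in> carrier_vec n" "v \<noteq> 0\<^sub>v n" "Jc *\<^sub>v v = \<mu> \<cdot>\<^sub>v v"
    using ev unfolding eigenvalue_def eigenvector_def Jc_def[symmetric] dims by blast
  define w where "w i = v $ i" for i
  have dv: "dim_vec v = n" using v(1) by simp
  obtain i0 where i0: "i0 < n" "w i0 \<noteq> 0"
  proof -
    have "\<exists>i<n. v $ i \<noteq> 0"
    proof (rule ccontr)
      assume "\<not> ?thesis"
      hence "v = 0\<^sub>v n" using dv by (intro eq_vecI) auto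
      with v(2) show False by simp
    qed
    thus ?thesis using that unfolding w_def by blast
  qed
  then obtain k where nk: "n = Suc k" by (cases n) auto
  have row: "\<mu> * w i = of_real g * (\<Sum>j<n. of_real (mP i j) * w j)" if i: "i < n" for i
  proof -
    have "\<mu> * w i = (Jc *\<^sub>v v) $ i" using v(3) i dv unfolding w_def by simp
    also have "\<dots> = (\<Sum>j<n. Jc $$ (i,j) * w j)"
      using i dims dv unfolding w_def by (simp add: scalar_prod_def lessThan_atLeast0)
    also have "\<dots> = (\<Sum>j<n. of_real g * (of_real (mP i j) * w j))"
    proof (rule sum.cong[OF refl])
      fix j assume "j \<in> {..<n}"
      hence j: "j < n" by simp
      have pd: "dim_row (path_jacobian n \<gamma> \<delta> (harmonic n)) = n" "dim_col (path_jacobian n \<gamma> \<delta> (harmonic n)) = n"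
        unfolding path_jacobian_def by simp_all
      have "Jc $$ (i,j) = of_real (path_jacobian n \<gamma> \<delta> (harmonic n) $$ (i,j))"
        unfolding Jc_def using i j pd by simp
      also have "\<dots> = of_real (g * mP i j)" using i j by (simp only: entry_mP g_def)
      finally show "Jc $$ (i,j) * w j = of_real g * (of_real (mP i j) * w j)" by simp
    qed
    finally show ?thesis by (simp add: sum_distrib_left)
  qed
  obtain R where R: "R > 0" "(\<Sum>i<Suc k. cnj (w i) * (\<Sum>j<Suc k. of_real (mP i j) * w j)) = of_real R"
    using quad[of i0 k w] i0 nk by auto
  define N where "N = (\<Sum>i<n. cmod (w i)^2)"
  have N: "N > 0"
  proof -
    have "cmod (w i0)^2 \<le> N" unfolding N_def
      by (rule member_le_sum) (use i0 in auto)
    moreover have "cmod (w i0)^2 > 0" using i0 by simp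
    ultimately show ?thesis by linarith
  qed
  have "(\<Sum>i<n. cnj (w i) * (\<mu> * w i)) = of_real g * of_real R"
  proof -
    have "(\<Sum>i<n. cnj (w i) * (\<mu> * w i)) = (\<Sum>i<n. of_real g * (cnj (w i) * (\<Sum>j<n. of_real (mP i j) * w j)))"
      by (rule sum.cong[OF refl]) (simp add: row)
    also have "\<dots> = of_real g * (\<Sum>i<n. cnj (w i) * (\<Sum>j<n. of_real (mP i j) * w j))"
      by (simp only: sum_distrib_left)
    also have "\<dots> = of_real g * of_real R" using R(2) nk by (simp only:)
    finally show ?thesis .
  qed
  moreover have "(\<Sum>i<n. cnj (w i) * (\<mu> * w i)) = \<mu> * of_real N"
    unfolding N_def of_real_sum sum_distrib_left
    by (rule sum.cong[OF refl]) (simp only: complex_norm_square mult_ac)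
  ultimately have "\<mu> * of_real N = of_real (g * R)" by simp
  hence mu: "\<mu> = of_real (g * R / N)" using N by (simp add: field_simps)
  show ?thesis
    apply (rule exI[of _ "g * R / N"])
    using R(1) N mu unfolding g_def[symmetric]
    by (simp add: zero_less_divide_iff divide_less_0_iff zero_less_mult_iff mult_less_0_iff)
qed

theorem lemma3:
  fixes n :: nat and \<gamma> \<delta> :: real
  assumes "n \<ge> 1" and "\<gamma> \<ge> 0" and "\<delta> \<ge> 0"
  defines "v \<equiv> omega \<gamma> \<delta> 1"
  defines "g \<equiv> 2 * \<gamma> * (1 - v) - 1"
  shows "(lin_stable (path_jacobian n \<gamma> \<delta> (harmonic n)) \<longleftrightarrow> g < 0) \<and>
         (lin_unstable (path_jacobian n \<gamma> \<delta> (harmonic n)) \<longleftrightarrow> g > 0)"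
proof -
  define Jc where "Jc = map_mat complex_of_real (path_jacobian n \<gamma> \<delta> (harmonic n))"
  have car: "Jc \<in> carrier_mat n n" unfolding Jc_def path_jacobian_def by simp
  obtain \<mu>0 where mu0: "eigenvalue Jc \<mu>0"
    using spectrum_non_empty[OF car] assms(1) unfolding spectrum_def by auto
  have EC: "\<And>\<mu>. eigenvalue Jc \<mu> \<Longrightarrow> \<exists>r. \<mu> = of_real r \<and> (r < 0 \<longleftrightarrow> g < 0) \<and> (r > 0 \<longleftrightarrow> g > 0)"
    unfolding g_def v_def Jc_def by (rule eig_char)
  have S: "lin_stable (path_jacobian n \<gamma> \<delta> (harmonic n)) \<longleftrightarrow> g < 0"
  proof
    assume "lin_stable (path_jacobian n \<gamma> \<delta> (harmonic n))"
    hence "Re \<mu>0 < 0" using mu0 unfolding lin_stable_def Jc_def by blast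
    with EC[OF mu0] show "g < 0" by auto
  next
    assume g: "g < 0"
    show "lin_stable (path_jacobian n \<gamma> \<delta> (harmonic n))"
      unfolding lin_stable_def Jc_def[symmetric]
    proof (intro allI impI)
      fix \<mu> assume "eigenvalue Jc \<mu>"
      from EC[OF this] g show "\<mu> \<in> \<real> \<and> Re \<mu> < 0" by auto
    qed
  qed
  have U: "lin_unstable (path_jacobian n \<gamma> \<delta> (harmonic n)) \<longleftrightarrow> g > 0"
  proof
    assume "lin_unstable (path_jacobian n \<gamma> \<delta> (harmonic n))"
    then obtain \<mu> where "eigenvalue Jc \<mu>" "Re \<mu> > 0" unfolding lin_unstable_def Jc_def by blast
    with EC show "g > 0" by fastforce
  next
    assume g: "g > 0"
    from EC[OF mu0] g obtain r where "\<mu>0 = of_real r" "r > 0" by auto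
    with mu0 show "lin_unstable (path_jacobian n \<gamma> \<delta> (harmonic n))"
      unfolding lin_unstable_def Jc_def[symmetric] by auto
  qed
  from S U show ?thesis by blast
qed

end
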